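(* Consider the setting below with $P_0=0$, $E_{\mathrm{sleep}}\equiv 0$, $\gamma>0$, $\alpha\in(0,1]$, target rate $R>0$, and with no maximal power constraint (i.e. $P_{\mathrm{max}}=+\infty$, so $p_n\in[0,\infty)$). Define $$R_{\mathrm{a}}=\frac{W_0\!\left(-\alpha^{-1}e^{-\alpha^{-1}}\right)+\alpha^{-1}}{\log 2},$$ where $W_0$ is the principal branch of the Lambert $W$ function (so $R_{\mathrm{a}}=0$ when $\alpha=1$, in which case $NR/R_{\mathrm{a}}$ is interpreted as $+\infty$). Then a minimum of Problem (P) is achieved by activating $$N_{\mathrm{a}}=\lceil\!\lfloor \min(NR/R_{\mathrm{a}},N)\rceil\!\rfloor$$ time slots with uniform power $$p_n=\left(2^{RN/N_{\mathrm{a}}}-1\right)\sigma^2 \ \text{ for } n=0,\dots,N_{\mathrm{a}}-1,\qquad p_n=0 \text{ otherwise}.$$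
   Context: Setting: fix an integer $N\ge1$ (number of symbols in a frame), a symbol duration $T>0$, a normalized noise power $\sigma^2>0$, a maximal per-slot transmit power $P_{\mathrm{max}}\in(0,+\infty]$, constants $\alpha\in(0,1]$, $\gamma\ge0$, $P_0\ge0$, and a sleep power function $P_{\mathrm{sleep}}:[0,\infty)\to[0,\infty)$ with sleep energy $E_{\mathrm{sleep}}(t)=\int_0^tP_{\mathrm{sleep}}(t')dt'$. An allocation is an integer $N_{\mathrm{a}}\in\{0,\dots,N\}$ together with powers $p_0,\dots,p_{N_{\mathrm{a}}-1}\in[0,P_{\mathrm{max}}]$ (and $p_n=0$ for $n\ge N_{\mathrm{a}}$). Its average consumed power is $$P_{\mathrm{cons}}=\frac{N_{\mathrm{a}}}{N}P_0+\frac{\gamma}{N}\sum_{n=0}^{N_{\mathrm{a}}-1}p_n^{\alpha}+\frac{E_{\mathrm{sleep}}((N-N_{\mathrm{a}})T)}{NT}.$$ Problem (P): given a target rate $R>0$, minimize $P_{\mathrm{cons}}$ over all allocations subject to $\frac1N\sum_{n=0}^{N_{\mathrm{a}}-1}\log_2(1+p_n/\sigma^2)=R$. Notation: for real $y\ge0$, $\lceil\!\lfloor y\rceil\!\rfloor$ (ceil-floor operator) denotes whichever of $\lfloor y\rfloor$, $\lceil y\rceil$ gives the smaller value of the objective of the problem under consideration (with the corresponding uniform allocation). *)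

theory Defs
  imports Complex_Main
begin

definition lambertW0 :: "real \<Rightarrow> real" where
  "lambertW0 x = (THE w. w \<ge> -1 \<and> w * exp w = x)"

definition pcons :: "nat \<Rightarrow> real \<Rightarrow> real \<Rightarrow> real \<Rightarrow> real \<Rightarrow> (real \<Rightarrow> real)
                      \<Rightarrow> nat \<Rightarrow> (nat \<Rightarrow> real) \<Rightarrow> real" where
  "pcons N T P0 \<gamma> \<alpha> Esleep Na p =
     real Na / real N * P0 + \<gamma> / real N * (\<Sum>n<Na. p n powr \<alpha>)
     + Esleep (real (N - Na) * T) / (real N * T)"

text \<open>Admissible allocation for Problem (P) with maximal power Pmax = +infinity.\<close>
definition feasible :: "nat \<Rightarrow> real \<Rightarrow> real \<Rightarrow> nat \<Rightarrow> (nat \<Rightarrow> real) \<Rightarrow> bool" where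
  "feasible N \<sigma>2 R Na p \<longleftrightarrow> Na \<le> N \<and> (\<forall>n<Na. 0 \<le> p n) \<and>
     (1 / real N) * (\<Sum>n<Na. log 2 (1 + p n / \<sigma>2)) = R"

definition unif_alloc :: "nat \<Rightarrow> real \<Rightarrow> real \<Rightarrow> nat \<Rightarrow> nat \<Rightarrow> real" where
  "unif_alloc N \<sigma>2 R k n = (if n < k then (2 powr (R * real N / real k) - 1) * \<sigma>2 else 0)"

text \<open>Ceil-floor operator: of floor y and ceiling y, the one whose uniform allocation has
  the smaller objective value cost; floor y is only eligible when it is >= 1 (0 active slots
  cannot achieve a positive rate).\<close>
definition ceilfloor :: "(nat \<Rightarrow> real) \<Rightarrow> real \<Rightarrow> nat" where
  "ceilfloor cost y =
     (if 1 \<le> nat \<lfloor>y\<rfloor> \<and> cost (nat \<lfloor>y\<rfloor>) \<le> cost (nat \<lceil>y\<rceil>) then nat \<lfloor>y\<rfloor> else nat \<lceil>y\<rceil>)"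

end

theory Submission
  imports Defs
begin

definition ff :: "real \<Rightarrow> real \<Rightarrow> real" where "ff a x = (2 powr x - 1) powr a"
definition fd :: "real \<Rightarrow> real \<Rightarrow> real" where
  "fd a x = a * ln 2 * ff a x * 2 powr x / (2 powr x - 1)"
definition fdd :: "real \<Rightarrow> real \<Rightarrow> real" where
  "fdd a x = a * (ln 2)^2 * ff a x * 2 powr x * (a * 2 powr x - 1) / (2 powr x - 1)^2"

lemma ff_exp: "x > 0 \<Longrightarrow> ff a x = exp (a * ln (exp (x * ln 2) - 1))"
proof -
  assume "x > 0"
  hence "exp (x * ln 2) > 1" by (simp add: one_less_exp_iff)
  thus ?thesis unfolding ff_def powr_def using \<open>x > 0\<close> by (simp add: mult.commute)
qed

lemma ff_deriv: assumes "x > 0" shows "(ff a has_real_derivative fd a x) (at x)"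
proof -
  have e: "exp (x * ln 2) > 1" using assms by (simp add: one_less_exp_iff)
  have "((\<lambda>y. exp (a * ln (exp (y * ln 2) - 1))) has_real_derivative
     exp (a * ln (exp (x * ln 2) - 1)) * (a * (exp (x * ln 2) * ln 2 / (exp (x * ln 2) - 1)))) (at x)"
    using e by (auto intro!: derivative_eq_intros)
  moreover have "exp (a * ln (exp (x * ln 2) - 1)) * (a * (exp (x * ln 2) * ln 2 / (exp (x * ln 2) - 1))) = fd a x"
    unfolding fd_def using ff_exp[OF assms, of a] by (simp add: powr_def)
  ultimately have "((\<lambda>y. exp (a * ln (exp (y * ln 2) - 1))) has_real_derivative fd a x) (at x)" by simp
  thus ?thesis
    by (rule has_field_derivative_transform_within_open[where S="{0<..}"]) (use assms ff_exp in auto)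
qed


lemma fd_exp: "x > 0 \<Longrightarrow> fd a x = a * ln 2 * exp (a * ln (exp (x * ln 2) - 1)) * exp (x * ln 2) / (exp (x * ln 2) - 1)"
  unfolding fd_def using ff_exp[of x a] by (simp add: powr_def mult.commute)

lemma alg2: "(E::real) > 1 \<Longrightarrow> ((F*(E*ln 2*a)*(a*ln 2)*E/(E-1) + E*ln 2*(a*ln 2*F))*(E-1) - a*ln 2*F*E*(E*ln 2)) / ((E-1)*(E-1)) = a*(ln 2)^2*F*E*(a*E-1)/(E-1)^2"
proof -
  assume "E > 1"
  hence "E - 1 \<noteq> 0" by simp
  have 1: "(F*(E*ln 2*a)*(a*ln 2)*E/(E-1) + E*ln 2*(a*ln 2*F))*(E-1) = F*(E*ln 2*a)*(a*ln 2)*E + E*ln 2*(a*ln 2*F)*(E-1)"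
    using \<open>E - 1 \<noteq> 0\<close> by (simp add: field_simps)
  have 2: "F*(E*ln 2*a)*(a*ln 2)*E + E*ln 2*(a*ln 2*F)*(E-1) - a*ln 2*F*E*(E*ln 2) = a*(ln 2)^2*F*E*(a*E-1)"
    by (simp add: algebra_simps power2_eq_square)
  show ?thesis unfolding 1 2 by (simp add: power2_eq_square)
qed

lemma fd_deriv: assumes "x > 0" shows "(fd a has_real_derivative fdd a x) (at x)"
proof -
  have e: "exp (x * ln 2) > 1" using assms by (simp add: one_less_exp_iff)
  have "((\<lambda>y. a * ln 2 * exp (a * ln (exp (y * ln 2) - 1)) * exp (y * ln 2) / (exp (y * ln 2) - 1)) has_real_derivative
     ((exp (a * ln (exp (x * ln 2) - 1)) * (exp (x * ln 2) * ln 2 * a) * (a * ln 2) * exp (x * ln 2) / (exp (x * ln 2) - 1) +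
       exp (x * ln 2) * ln 2 * (a * ln 2 * exp (a * ln (exp (x * ln 2) - 1)))) * (exp (x * ln 2) - 1) -
      a * ln 2 * exp (a * ln (exp (x * ln 2) - 1)) * exp (x * ln 2) * (exp (x * ln 2) * ln 2)) /
     ((exp (x * ln 2) - 1) * (exp (x * ln 2) - 1))) (at x)"
    using e by (auto intro!: derivative_eq_intros)
  also have "((exp (a * ln (exp (x * ln 2) - 1)) * (exp (x * ln 2) * ln 2 * a) * (a * ln 2) * exp (x * ln 2) / (exp (x * ln 2) - 1) +
       exp (x * ln 2) * ln 2 * (a * ln 2 * exp (a * ln (exp (x * ln 2) - 1)))) * (exp (x * ln 2) - 1) -
      a * ln 2 * exp (a * ln (exp (x * ln 2) - 1)) * exp (x * ln 2) * (exp (x * ln 2) * ln 2)) /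
     ((exp (x * ln 2) - 1) * (exp (x * ln 2) - 1)) = fdd a x"
  proof -
    have "2 powr x = exp (x * ln 2)" unfolding powr_def by (simp add: mult.commute)
    moreover have "ff a x = exp (a * ln (exp (x * ln 2) - 1))" using ff_exp[OF assms, of a] by simp
    ultimately show ?thesis unfolding fdd_def using alg2[OF e, of "exp (a * ln (exp (x * ln 2) - 1))" a] by simp
  qed
  finally have "((\<lambda>y. a * ln 2 * exp (a * ln (exp (y * ln 2) - 1)) * exp (y * ln 2) / (exp (y * ln 2) - 1)) has_real_derivative fdd a x) (at x)" .
  thus ?thesis
    by (rule has_field_derivative_transform_within_open[where S="{0<..}"]) (use assms fd_exp in auto)
qed

lemma level_ineq:
  fixes w1 w2 b :: real
  assumes w1: "0 < w1" and w12: "w1 < w2" and lv: "ln (1+w2) - ln (1+w1) = b * (ln w2 - ln w1)"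
  shows "2*w1*w2*(1-b) < b*(w1+w2)"
proof -
  define F where "F v = (ln(1+v) - ln(1+w1))*(w1+v+2*w1*v) - 2*w1*v*(ln v - ln w1)" for v
  define F1 where "F1 v = (w1+v+2*w1*v)/(1+v) + (ln(1+v) - ln(1+w1))*(1+2*w1) - 2*w1*(ln v - ln w1) - 2*w1" for v
  define F2 where "F2 v = (1+w1)/(1+v)^2 + (1+2*w1)/(1+v) - 2*w1/v" for v
  have dF: "(F has_real_derivative F1 v) (at v)" if "v > 0" for v
    unfolding F_def F1_def using that w1
    apply (auto intro!: derivative_eq_intros)
    done
  have dF1: "(F1 has_real_derivative F2 v) (at v)" if "v > 0" for v
    unfolding F1_def F2_def using that w1
    apply (auto intro!: derivative_eq_intros)
    apply (simp add: divide_simps)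
    apply (simp add: algebra_simps power2_eq_square)
    done
  have F2pos: "F2 v > 0" if "v > w1" for v
  proof -
    have v: "v > 0" using that w1 by simp
    have "F2 v = (v-w1)*(v+2)/(v*(1+v)^2)" unfolding F2_def using v
      by (simp add: divide_simps) (simp add: algebra_simps power2_eq_square)
    thus ?thesis using that v by simp
  qed
  have F1w1: "F1 w1 = 0" unfolding F1_def using w1 by (simp add: field_simps)
  have F1pos: "F1 v > 0" if vw: "v > w1" for v
  proof -
    obtain z where z: "w1 < z" "z < v" "F1 v - F1 w1 = (v - w1) * F2 z"
      using MVT2[OF vw, of F1 F2] dF1 w1 by force
    thus ?thesis using F2pos[of z] F1w1 vw by simp
  qed
  have Fw1: "F w1 = 0" unfolding F_def by simp
  obtain z where z: "w1 < z" "z < w2" "F w2 - F w1 = (w2 - w1) * F1 z"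
    using MVT2[OF w12, of F F1] dF w1 by force
  hence Fpos: "F w2 > 0" using F1pos[of z] Fw1 w12 by simp
  have L: "ln w2 - ln w1 > 0" using w1 w12 by simp
  have "F w2 = (ln w2 - ln w1) * (b*(w1+w2+2*w1*w2) - 2*w1*w2)" unfolding F_def lv
    by (simp add: algebra_simps)
  with Fpos L have "b*(w1+w2+2*w1*w2) - 2*w1*w2 > 0" by (simp add: zero_less_mult_iff)
  thus ?thesis by (simp add: algebra_simps)
qed

lemma two_powr_gt1: "x > 0 \<Longrightarrow> 2 powr x > (1::real)"
  by (simp add: powr_less_cancel_iff[of 2 0 x, simplified])

lemma ff_0: "a > 0 \<Longrightarrow> ff a 0 = 0" unfolding ff_def by simp

lemma ff_cont: "a > 0 \<Longrightarrow> continuous_on {0..} (ff a)"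
  unfolding ff_def
  by (rule continuous_on_powr') (auto intro!: continuous_intros simp: ge_one_powr_ge_zero)

lemma fd_w: "x > 0 \<Longrightarrow> fd a x = a * ln 2 * (2 powr x - 1) powr a * (1 + (2 powr x - 1)) / (2 powr x - 1)"
  unfolding fd_def ff_def by simp

lemma fdd_w: "x > 0 \<Longrightarrow> fdd a x = fd a x * ln 2 * (a - (1 - a) / (2 powr x - 1))"
proof -
  assume x: "x > 0"
  define w where "w = 2 powr x - 1"
  have w: "w > 0" using two_powr_gt1[OF x] w_def by simp
  have e: "2 powr x = 1 + w" using w_def by simp
  show ?thesis unfolding fdd_def fd_def e w_def[symmetric] using w
    by (simp add: field_simps power2_eq_square)
qed

lemma fd_pos: "x > 0 \<Longrightarrow> a > 0 \<Longrightarrow> fd a x > 0"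
  using two_powr_gt1[of x] unfolding fd_def ff_def by simp

lemma second_neg:
  assumes a: "0 < a" "a \<le> 1" and j: "j \<ge> 1" and x: "0 < x" "x < y"
    and eq: "fd a x = fd a y"
  shows "fdd a x + fdd a y / j < 0"
proof -
  define w1 where "w1 = 2 powr x - 1"
  define w2 where "w2 = 2 powr y - 1"
  have w1: "w1 > 0" using two_powr_gt1[OF x(1)] w1_def by simp
  have w12: "w1 < w2" unfolding w1_def w2_def using x by simp
  have "a * ln 2 * w1 powr a * (1 + w1) / w1 = a * ln 2 * w2 powr a * (1 + w2) / w2"
    using eq fd_w[OF x(1), of a] fd_w[of y a] x unfolding w1_def w2_def by simp
  hence "(a * ln 2) * (w1 powr a * (1 + w1) / w1) = (a * ln 2) * (w2 powr a * (1 + w2) / w2)"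
    by (simp add: mult.assoc times_divide_eq_right)
  moreover have "a * ln 2 \<noteq> 0" using a by simp
  ultimately have "w1 powr a * (1 + w1) / w1 = w2 powr a * (1 + w2) / w2"
    using mult_left_cancel by blast
  hence "ln (w1 powr a * (1 + w1) / w1) = ln (w2 powr a * (1 + w2) / w2)" by simp
  hence "a * ln w1 + ln (1 + w1) - ln w1 = a * ln w2 + ln (1 + w2) - ln w2"
    using w1 w12 by (simp add: ln_div ln_mult ln_powr)
  hence lv: "ln (1+w2) - ln (1+w1) = (1 - a) * (ln w2 - ln w1)" by (simp add: algebra_simps)
  have L: "2*w1*w2*(1-(1-a)) < (1-a)*(w1+w2)" by (rule level_ineq[OF w1 w12 lv])
  define X where "X = a - (1 - a) / w1"
  define Y where "Y = a - (1 - a) / w2"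
  have XY: "X + Y < 0"
  proof -
    have "X + Y = (2*w1*w2*a - (1-a)*(w1+w2)) / (w1*w2)" unfolding X_def Y_def using w1 w12
      by (simp add: field_simps)
    moreover have "2*w1*w2*a - (1-a)*(w1+w2) < 0" using L by simp
    moreover have "w1 * w2 > 0" using w1 w12 by simp
    ultimately show ?thesis by (simp add: divide_neg_pos)
  qed
  have XleY: "X \<le> Y" unfolding X_def Y_def using w1 w12 a
    by (simp add: divide_left_mono)
  have S: "X + Y / j < 0"
  proof (cases "Y \<ge> 0")
    case True
    have "Y / j \<le> Y" using True j by (simp add: divide_le_eq mult_le_cancel_left1 mult_right_mono)
    thus ?thesis using XY by simp
  next
    case False
    hence "Y / j < 0" using j by (simp add: divide_neg_pos)
    thus ?thesis using XleY False by simp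
  qed
  have y0: "y > 0" using x by simp
  have K: "fd a x > 0" by (rule fd_pos[OF x(1) a(1)])
  have "fdd a x + fdd a y / j = fd a x * ln 2 * (X + Y / j)"
    unfolding fdd_w[OF x(1)] fdd_w[OF y0] X_def Y_def w1_def w2_def eq
    by (simp add: algebra_simps)
  also have "\<dots> < 0" using K S by (simp add: mult_pos_neg)
  finally show ?thesis .
qed

lemma key:
  assumes a: "0 < a" "a \<le> 1" and j: "j \<ge> 1" and S: "S \<ge> 0"
    and t: "0 \<le> t" "t \<le> S / (j + 1)"
  shows "ff a t + j * ff a ((S - t) / j) \<ge> min (j * ff a (S / j)) ((j + 1) * ff a (S / (j + 1)))"
proof (cases "S = 0")
  case True
  hence "t = 0" using t by simp
  thus ?thesis using True ff_0[OF a(1)] by simp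
next
  case False
  hence S: "S > 0" using S by simp
  define c where "c = S / (j + 1)"
  have c: "c > 0" unfolding c_def using S j by simp
  have Sc: "S - c = j * c" unfolding c_def using j by (simp add: field_simps)
  have ac: "(S - c) / j = c" unfolding Sc using j by simp
  define \<phi> where "\<phi> t = ff a t + j * ff a ((S - t) / j)" for t
  define \<phi>1 where "\<phi>1 t = fd a t - fd a ((S - t) / j)" for t
  define \<phi>2 where "\<phi>2 t = fdd a t + fdd a ((S - t) / j) / j" for t
  have \<phi>0: "\<phi> 0 = j * ff a (S / j)" unfolding \<phi>_def using ff_0[OF a(1)] by simp
  have \<phi>c: "\<phi> c = (j + 1) * ff a c" unfolding \<phi>_def ac by (simp add: algebra_simps)
  have arg_pos: "(S - x) / j > 0" if "x < S" for x using that j by simp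
  have cS: "c < S" unfolding c_def using S j by (simp add: field_simps)
  have d\<phi>: "(\<phi> has_real_derivative \<phi>1 x) (at x)" if "0 < x" "x < S" for x
  proof -
    have g: "((\<lambda>x. (S - x) / j) has_real_derivative (- 1 / j)) (at x)"
      using j by (auto intro!: derivative_eq_intros)
    have "((\<lambda>x. ff a ((S - x) / j)) has_real_derivative fd a ((S - x) / j) * (- 1 / j)) (at x)"
      by (rule DERIV_chain2[OF ff_deriv[OF arg_pos[OF that(2)]] g])
    hence "((\<lambda>x. ff a x + j * ff a ((S - x) / j)) has_real_derivative
        fd a x + j * (fd a ((S - x) / j) * (- 1 / j))) (at x)"
      by (intro DERIV_add ff_deriv that DERIV_cmult)
    thus ?thesis unfolding \<phi>_def \<phi>1_def using j by simp
  qed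
  have d\<phi>1: "(\<phi>1 has_real_derivative \<phi>2 x) (at x)" if "0 < x" "x < S" for x
  proof -
    have g: "((\<lambda>x. (S - x) / j) has_real_derivative (- 1 / j)) (at x)"
      using j by (auto intro!: derivative_eq_intros)
    have "((\<lambda>x. fd a ((S - x) / j)) has_real_derivative fdd a ((S - x) / j) * (- 1 / j)) (at x)"
      by (rule DERIV_chain2[OF fd_deriv[OF arg_pos[OF that(2)]] g])
    hence "((\<lambda>x. fd a x - fd a ((S - x) / j)) has_real_derivative
        fdd a x - (fdd a ((S - x) / j) * (- 1 / j))) (at x)"
      by (intro DERIV_diff fd_deriv that)
    thus ?thesis unfolding \<phi>1_def \<phi>2_def by simp
  qed
  have cont: "continuous_on {0..c} \<phi>"
  proof -
    have "continuous_on {0..c} (\<lambda>t. ff a t)"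
      using continuous_on_subset[OF ff_cont[OF a(1)]] by auto
    moreover have "continuous_on {0..c} (\<lambda>t. ff a ((S - t) / j))"
    proof (rule continuous_on_compose2[OF ff_cont[OF a(1)]])
      show "continuous_on {0..c} (\<lambda>t. (S - t) / j)" using j by (intro continuous_intros) auto
      show "(\<lambda>t. (S - t) / j) ` {0..c} \<subseteq> {0..}" using cS j by auto
    qed
    ultimately show ?thesis unfolding \<phi>_def by (intro continuous_intros)
  qed
  obtain t0 where t0: "t0 \<in> {0..c}" "\<And>y. y \<in> {0..c} \<Longrightarrow> \<phi> t0 \<le> \<phi> y"
    using continuous_attains_inf[OF compact_Icc _ cont] c by auto
  have mn: "\<phi> t0 \<ge> min (\<phi> 0) (\<phi> c)"
  proof (rule ccontr)
    assume H: "\<not> ?thesis"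
    hence t0i: "0 < t0" "t0 < c" using t0(1) by (auto simp: less_le)
    have t0S: "t0 < S" using t0i cS by simp
    have "\<phi>1 t0 = 0"
    proof (rule DERIV_local_min[OF d\<phi>[OF t0i(1) t0S]])
      show "0 < min t0 (c - t0)" using t0i by simp
      show "\<forall>y. \<bar>t0 - y\<bar> < min t0 (c - t0) \<longrightarrow> \<phi> t0 \<le> \<phi> y"
      proof (intro allI impI)
        fix y assume "\<bar>t0 - y\<bar> < min t0 (c - t0)"
        hence "y \<in> {0..c}" by (auto simp: abs_if split: if_splits)
        thus "\<phi> t0 \<le> \<phi> y" by (rule t0(2))
      qed
    qed
    hence eq: "fd a t0 = fd a ((S - t0) / j)" unfolding \<phi>1_def by simp
    have lt: "t0 < (S - t0) / j" using t0i j unfolding c_def by (simp add: field_simps)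
    have neg: "\<phi>2 t0 < 0" unfolding \<phi>2_def
      by (rule second_neg[OF a j t0i(1) lt eq])
    obtain d where d: "d > 0" "\<And>h. h > 0 \<Longrightarrow> h < d \<Longrightarrow> \<phi>1 t0 > \<phi>1 (t0 + h)"
      using DERIV_neg_dec_right[OF d\<phi>1[OF t0i(1) t0S] neg] by blast
    define e where "e = min d (c - t0) / 2"
    have e: "e > 0" "e < d" "t0 + e < c" unfolding e_def using d(1) t0i by (auto simp: min_def field_simps)
    obtain z where z: "t0 < z" "z < t0 + e" "\<phi> (t0 + e) - \<phi> t0 = (t0 + e - t0) * \<phi>1 z"
      using MVT2[of t0 "t0 + e" \<phi> \<phi>1] e d\<phi> t0i cS by force
    have "\<phi>1 z < 0" using d(2)[of "z - t0"] z e \<open>\<phi>1 t0 = 0\<close> by simp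
    hence "e * \<phi>1 z < 0" using e(1) by (simp add: mult_pos_neg)
    hence "\<phi> (t0 + e) < \<phi> t0" using z(3) by simp
    moreover have "\<phi> t0 \<le> \<phi> (t0 + e)" using t0(2)[of "t0 + e"] e t0i by simp
    ultimately show False by simp
  qed
  have "\<phi> t \<ge> \<phi> t0" using t0(2)[of t] t unfolding c_def by simp
  thus ?thesis using mn \<phi>0 \<phi>c unfolding \<phi>_def c_def by simp
qed

lemma lowerA:
  assumes a: "0 < a" "a \<le> 1"
  shows "finite I \<Longrightarrow> card I = m \<Longrightarrow> m \<ge> 1 \<Longrightarrow> (\<forall>i\<in>I. x i \<ge> 0) \<Longrightarrow>
     \<exists>j::nat. 1 \<le> j \<and> j \<le> m \<and> real j * ff a ((\<Sum>i\<in>I. x i) / real j) \<le> (\<Sum>i\<in>I. ff a (x i))"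
proof (induction m arbitrary: I)
  case 0
  thus ?case by simp
next
  case (Suc m)
  show ?case
  proof (cases "m = 0")
    case True
    then obtain i where I: "I = {i}" using Suc.prems card_1_singletonE by auto
    show ?thesis by (rule exI[of _ 1]) (simp add: I True)
  next
    case False
    have ne: "I \<noteq> {}" using Suc.prems by auto
    have "Min (x ` I) \<in> x ` I" using Min_in[of "x ` I"] Suc.prems(1) ne by auto
    then obtain i0 where i0: "i0 \<in> I" "x i0 = Min (x ` I)" by (metis imageE)
    have i0min: "x i0 \<le> x i" if "i \<in> I" for i
      using i0(2) Suc.prems(1) that by simp
    define I' where "I' = I - {i0}"
    have I': "finite I'" "card I' = m" using Suc.prems i0(1) unfolding I'_def by auto
    obtain j :: nat where j: "1 \<le> j" "j \<le> m"
      "real j * ff a ((\<Sum>i\<in>I'. x i) / real j) \<le> (\<Sum>i\<in>I'. ff a (x i))"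
      using Suc.IH[OF I'] False Suc.prems(4) unfolding I'_def by auto
    define t where "t = x i0"
    define S where "S = (\<Sum>i\<in>I. x i)"
    have SI: "S = t + (\<Sum>i\<in>I'. x i)" unfolding S_def t_def I'_def
      using Suc.prems(1) i0(1) by (simp add: sum.remove)
    have fI: "(\<Sum>i\<in>I. ff a (x i)) = ff a t + (\<Sum>i\<in>I'. ff a (x i))" unfolding t_def I'_def
      using Suc.prems(1) i0(1) by (simp add: sum.remove)
    have t0: "t \<ge> 0" unfolding t_def using Suc.prems(4) i0(1) by simp
    have "(\<Sum>i\<in>I. t) \<le> S" unfolding S_def t_def by (rule sum_mono) (rule i0min)
    hence tS: "real (Suc m) * t \<le> S" using Suc.prems(2) by simp
    have S0: "S \<ge> 0" unfolding S_def using Suc.prems(4) by (simp add: sum_nonneg)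
    have "(real j + 1) * t \<le> real (Suc m) * t" using j(2) t0 by (intro mult_right_mono) auto
    hence tle: "t \<le> S / (real j + 1)" using tS by (simp add: field_simps)
    have jr: "real j \<ge> 1" using j(1) by simp
    have K: "ff a t + real j * ff a ((S - t) / real j) \<ge>
        min (real j * ff a (S / real j)) ((real j + 1) * ff a (S / (real j + 1)))"
      by (rule key[OF a jr S0 t0 tle])
    have St: "S - t = (\<Sum>i\<in>I'. x i)" using SI by simp
    have main: "ff a t + real j * ff a ((S - t) / real j) \<le> (\<Sum>i\<in>I. ff a (x i))"
      using j(3) fI St by simp
    show ?thesis
    proof (cases "real j * ff a (S / real j) \<le> (real j + 1) * ff a (S / (real j + 1))")
      case True
      thus ?thesis using K main j unfolding S_def by (intro exI[of _ j]) auto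
    next
      case False
      thus ?thesis using K main j unfolding S_def by (intro exI[of _ "Suc j"]) (auto simp: add.commute)
    qed
  qed
qed

definition hq :: "real \<Rightarrow> real \<Rightarrow> real" where "hq a \<tau> = exp \<tau> * (a * \<tau> - 1) + 1"

lemma hq_deriv: "(hq a has_real_derivative exp \<tau> * (a * \<tau> - (1 - a))) (at \<tau>)"
  unfolding hq_def by (auto intro!: derivative_eq_intros simp: algebra_simps)

lemma hq_mono:
  assumes a: "0 < a" and "(1 - a) / a \<le> x" "x \<le> y" shows "hq a x \<le> hq a y"
proof (rule DERIV_nonneg_imp_nondecreasing[OF assms(3)])
  fix z assume "x \<le> z" "z \<le> y"
  hence "(1 - a) / a \<le> z" using assms by simp
  hence "a * z - (1 - a) \<ge> 0" using a by (simp add: field_simps)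
  thus "\<exists>d. (hq a has_real_derivative d) (at z) \<and> 0 \<le> d"
    using hq_deriv by (intro exI conjI) (auto)
qed

lemma hq_anti:
  assumes a: "0 < a" and "0 \<le> x" "x \<le> y" "y \<le> (1 - a) / a" shows "hq a x \<ge> hq a y"
proof (rule DERIV_nonpos_imp_nonincreasing[OF assms(3)])
  fix z assume "x \<le> z" "z \<le> y"
  hence "z \<le> (1 - a) / a" using assms by simp
  hence "a * z - (1 - a) \<le> 0" using a by (simp add: field_simps)
  thus "\<exists>d. (hq a has_real_derivative d) (at z) \<and> d \<le> 0"
    using hq_deriv by (intro exI conjI) (auto simp: mult_nonneg_nonpos)
qed

lemma hq_0: "hq a 0 = 0" unfolding hq_def by simp

lemma hq_signs:
  assumes a: "0 < a" and ts: "(1 - a) / a \<le> ts" "hq a ts = 0"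
  shows "ts \<le> t \<Longrightarrow> hq a t \<ge> 0" and "0 \<le> t \<Longrightarrow> t \<le> ts \<Longrightarrow> hq a t \<le> 0"
proof -
  assume "ts \<le> t" thus "hq a t \<ge> 0" using hq_mono[OF a ts(1)] ts(2) by fastforce
next
  assume t: "0 \<le> t" "t \<le> ts"
  show "hq a t \<le> 0"
  proof (cases "t \<le> (1 - a) / a")
    case True thus ?thesis using hq_anti[OF a order.refl t(1) True] hq_0 by simp
  next
    case False thus ?thesis using hq_mono[OF a _ t(2)] ts(2) by simp
  qed
qed

definition hh :: "real \<Rightarrow> real \<Rightarrow> real" where "hh a x = ff a x / x"

definition gg :: "real \<Rightarrow> real \<Rightarrow> real" where "gg a y = a * ln (exp (y * ln 2) - 1) - ln y"

lemma hh_gg: "x > 0 \<Longrightarrow> hh a x = exp (gg a x)"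
  unfolding hh_def gg_def using ff_exp[of x a] by (simp add: exp_diff)

lemma gg_deriv:
  assumes x: "x > 0"
  shows "(gg a has_real_derivative hq a (x * ln 2) / (x * (exp (x * ln 2) - 1))) (at x)"
proof -
  have e: "exp (x * ln 2) > 1" using x by (simp add: one_less_exp_iff)
  have "(gg a has_real_derivative a * (exp (x * ln 2) * ln 2 / (exp (x * ln 2) - 1)) - 1 / x) (at x)"
    unfolding gg_def using e x by (auto intro!: derivative_eq_intros)
  moreover have "a * (exp (x * ln 2) * ln 2 / (exp (x * ln 2) - 1)) - 1 / x = hq a (x * ln 2) / (x * (exp (x * ln 2) - 1))"
    unfolding hq_def using e x by (simp add: field_simps)
  ultimately show ?thesis by simp
qed

lemma hh_mono:
  assumes a: "0 < a" and ts: "(1 - a) / a \<le> ts" "hq a ts = 0"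
    and x: "0 < x" "ts / ln 2 \<le> x" "x \<le> y"
  shows "hh a x \<le> hh a y"
proof -
  have "gg a x \<le> gg a y"
  proof (rule DERIV_nonneg_imp_nondecreasing[OF x(3)])
    fix z assume z: "x \<le> z" "z \<le> y"
    hence z0: "z > 0" using x by simp
    have "x * ln 2 \<le> z * ln 2" using z by (simp add: mult_right_mono)
    moreover have "ts \<le> x * ln 2" using x(2) by (simp add: divide_le_eq)
    ultimately have "ts \<le> z * ln 2" by linarith
    hence "hq a (z * ln 2) \<ge> 0" by (rule hq_signs(1)[OF a ts])
    moreover have "exp (z * ln 2) > 1" using z0 by (simp add: one_less_exp_iff)
    ultimately show "\<exists>d. (gg a has_real_derivative d) (at z) \<and> 0 \<le> d"
      using gg_deriv[OF z0, of a] z0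
      by (intro exI[of _ "hq a (z * ln 2) / (z * (exp (z * ln 2) - 1))"] conjI) auto
  qed
  thus ?thesis using hh_gg x by simp
qed

lemma hh_anti:
  assumes a: "0 < a" and ts: "(1 - a) / a \<le> ts" "hq a ts = 0"
    and x: "0 < x" "x \<le> y" "y \<le> ts / ln 2"
  shows "hh a x \<ge> hh a y"
proof -
  have "gg a x \<ge> gg a y"
  proof (rule DERIV_nonpos_imp_nonincreasing[OF x(2)])
    fix z assume z: "x \<le> z" "z \<le> y"
    hence z0: "z > 0" using x by simp
    have "z * ln 2 \<le> y * ln 2" using z by (simp add: mult_right_mono)
    moreover have "y * ln 2 \<le> ts" using x(3) by (simp add: le_divide_eq)
    ultimately have "z * ln 2 \<le> ts" by linarith
    hence "hq a (z * ln 2) \<le> 0" using z0 by (intro hq_signs(2)[OF a ts]) auto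
    moreover have "exp (z * ln 2) > 1" using z0 by (simp add: one_less_exp_iff)
    ultimately show "\<exists>d. (gg a has_real_derivative d) (at z) \<and> d \<le> 0"
      using gg_deriv[OF z0, of a] z0
      by (intro exI[of _ "hq a (z * ln 2) / (z * (exp (z * ln 2) - 1))"] conjI) (auto simp: divide_nonpos_pos)
  qed
  thus ?thesis using hh_gg x by simp
qed

lemma wexp_strict: fixes u v :: real assumes "-1 \<le> u" "u < v" shows "u * exp u < v * exp v"
proof -
  have d: "((\<lambda>w. w * exp w) has_real_derivative (1 + w) * exp w) (at w)" for w :: real
    by (auto intro!: derivative_eq_intros simp: algebra_simps)
  obtain z where z: "u < z" "z < v" "v * exp v - u * exp u = (v - u) * ((1 + z) * exp z)"
    using MVT2[OF assms(2), of "\<lambda>w. w * exp w" "\<lambda>w. (1 + w) * exp w"] d by blast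
  have "(v - u) * ((1 + z) * exp z) > 0" using z assms by simp
  thus ?thesis using z by simp
qed

lemma lambert_ok:
  assumes a: "0 < a" "a \<le> 1"
  defines "z \<equiv> - (1 / a) * exp (- (1 / a))"
  shows "lambertW0 z \<ge> -1 \<and> lambertW0 z * exp (lambertW0 z) = z"
proof -
  define c where "c = 1 / a"
  have c1: "c \<ge> 1" unfolding c_def using a by simp
  have ex: "\<exists>w. w \<ge> -1 \<and> w * exp w = z"
  proof -
    have "1 + (c - 1) \<le> exp (c - 1)" by (rule exp_ge_add_one_self)
    hence "c \<le> exp (c - 1)" by simp
    hence "c * exp (- c) \<le> exp (c - 1) * exp (- c)" by (simp add: mult_right_mono)
    also have "\<dots> = exp (-1)" by (simp add: exp_add[symmetric])
    finally have "(-1) * exp (-1) \<le> z" unfolding z_def c_def by simp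
    moreover have "z \<le> 0 * exp 0" unfolding z_def using a by simp
    moreover have "continuous_on {-1..0} (\<lambda>w::real. w * exp w)" by (intro continuous_intros)
    ultimately obtain w where "w \<ge> -1" "w \<le> 0" "w * exp w = z"
      using IVT'[of "\<lambda>w. w * exp w" "-1" z 0] by auto
    thus ?thesis by auto
  qed
  have un: "\<exists>!w. w \<ge> -1 \<and> w * exp w = z"
  proof (rule ex_ex1I[OF ex])
    fix u v assume u: "u \<ge> -1 \<and> u * exp u = z" and v: "v \<ge> -1 \<and> v * exp v = z"
    show "u = v"
    proof (rule ccontr)
      assume "u \<noteq> v"
      hence "u < v \<or> v < u" by auto
      thus False using wexp_strict u v by force
    qed
  qed
  show ?thesis unfolding lambertW0_def by (rule theI'[OF un])
qed

lemma lambert_1: "lambertW0 (- (1 / 1) * exp (- (1 / 1))) = -1"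
proof -
  have "lambertW0 (- (1 / 1) * exp (- (1 / 1))) \<ge> -1 \<and>
     lambertW0 (- (1 / 1) * exp (- (1 / 1))) * exp (lambertW0 (- (1 / 1) * exp (- (1 / 1)))) = - (1 / 1) * exp (- (1 / 1))"
    by (rule lambert_ok) auto
  thus ?thesis using wexp_strict[of "-1" "lambertW0 (- (1 / 1) * exp (- (1 / 1)))"]
    by (cases "lambertW0 (- (1 / 1) * exp (- (1 / 1))) = -1") (auto simp: less_le)
qed

lemma ts_props:
  assumes a: "0 < a" "a \<le> 1"
  defines "ts \<equiv> lambertW0 (- (1 / a) * exp (- (1 / a))) + 1 / a"
  shows "(1 - a) / a \<le> ts" "hq a ts = 0" "ts \<ge> 0"
proof -
  define w where "w = lambertW0 (- (1 / a) * exp (- (1 / a)))"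
  have w: "w \<ge> -1" "w * exp w = - (1 / a) * exp (- (1 / a))"
    using lambert_ok[OF a] unfolding w_def by auto
  have "(1 - a) / a = 1 / a - 1" using a by (simp add: field_simps)
  thus "(1 - a) / a \<le> ts" unfolding ts_def w_def[symmetric] using w by simp
  moreover have "(1 - a) / a \<ge> 0" using a by simp
  ultimately show "ts \<ge> 0" by simp
  have "hq a ts = exp (1 / a) * a * (w * exp w) + 1"
    unfolding hq_def ts_def w_def[symmetric] using a
    by (simp add: exp_add algebra_simps)
  also have "\<dots> = 0" unfolding w(2) using a by (simp add: exp_minus field_simps)
  finally show "hq a ts = 0" .
qed

lemma choose:
  fixes cost :: "nat \<Rightarrow> real" and H :: "real \<Rightarrow> real"
  assumes N: "N \<ge> 1" and S: "S > 0" and Ra: "Ra \<ge> 0" and K: "K > 0"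
    and mono: "\<And>x x'. 0 < x \<Longrightarrow> Ra \<le> x \<Longrightarrow> x \<le> x' \<Longrightarrow> H x \<le> H x'"
    and anti: "\<And>x x'. 0 < x \<Longrightarrow> x \<le> x' \<Longrightarrow> x' \<le> Ra \<Longrightarrow> H x' \<le> H x"
    and cost: "\<And>k. k \<ge> 1 \<Longrightarrow> cost k = K * H (S / real k)"
    and y: "y = (if Ra = 0 then real N else min (S / Ra) (real N))"
  shows "1 \<le> ceilfloor cost y \<and> ceilfloor cost y \<le> N \<and>
     (\<forall>j. 1 \<le> j \<longrightarrow> j \<le> N \<longrightarrow> cost (ceilfloor cost y) \<le> cost j)"
proof (cases "Ra = 0")
  case True
  hence yN: "y = real N" using y by simp
  have cf: "ceilfloor cost y = N" unfolding ceilfloor_def yN by simp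
  have "cost N \<le> cost j" if j: "1 \<le> j" "j \<le> N" for j
  proof -
    have "S / real N \<le> S / real j" using j S by (simp add: frac_le)
    hence "H (S / real N) \<le> H (S / real j)" using mono[of "S / real N" "S / real j"] S N True by simp
    thus ?thesis using cost[of N] cost[of j] N j K by simp
  qed
  thus ?thesis using cf N by simp
next
  case False
  hence Rap: "Ra > 0" using Ra by simp
  have yv: "y = min (S / Ra) (real N)" using y False by simp
  have y0: "y > 0" using yv S Rap N by simp
  define fl where "fl = nat \<lfloor>y\<rfloor>"
  define ce where "ce = nat \<lceil>y\<rceil>"
  have fl: "real fl \<le> y" unfolding fl_def using y0 by simp
  have ce: "y \<le> real ce" unfolding ce_def using y0 by (simp add: le_of_int_ceiling)
  have "\<lceil>y\<rceil> \<le> \<lfloor>y\<rfloor> + 1" using ceiling_altdef[of y] by (auto split: if_splits)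
  hence cefl: "ce \<le> fl + 1" unfolding ce_def fl_def using y0 by linarith
  have ce1: "ce \<ge> 1" using ce y0 by (cases ce) auto
  have ceN: "ce \<le> N"
  proof -
    have "y \<le> real N" using yv by simp
    hence "\<lceil>y\<rceil> \<le> \<lceil>real N\<rceil>" by (rule ceiling_mono)
    hence "\<lceil>y\<rceil> \<le> int N" by simp
    thus ?thesis unfolding ce_def by linarith
  qed
  have low: "cost fl \<le> cost j" if j: "1 \<le> j" "j \<le> fl" for j
  proof -
    have fl1: "fl \<ge> 1" using j by simp
    have "real fl * Ra \<le> S"
    proof -
      have "real fl \<le> S / Ra" using fl yv by simp
      thus ?thesis using Rap by (simp add: le_divide_eq)
    qed
    hence RaS: "Ra \<le> S / real fl" using fl1 by (simp add: le_divide_eq mult.commute)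
    have "S / real fl \<le> S / real j" using j S by (simp add: frac_le)
    hence "H (S / real fl) \<le> H (S / real j)" using mono[OF _ RaS] S fl1 by simp
    thus ?thesis using cost[of fl] cost[of j] fl1 j K by simp
  qed
  have high: "cost ce \<le> cost j" if j: "ce \<le> j" "j \<le> N" for j
  proof (cases "S / Ra \<le> real N")
    case True
    hence "y = S / Ra" using yv by simp
    hence "S / Ra \<le> real ce" using ce by simp
    hence "S \<le> real ce * Ra" using Rap by (simp add: divide_le_eq)
    hence ceRa: "S / real ce \<le> Ra" using ce1 by (simp add: divide_le_eq mult.commute)
    have j1: "j \<ge> 1" using j ce1 by simp
    have "S / real j \<le> S / real ce" using j S ce1 by (simp add: frac_le)
    moreover have "S / real j > 0" using S j1 by simp
    ultimately have "H (S / real ce) \<le> H (S / real j)" using anti ceRa by blast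
    thus ?thesis using cost[of ce] cost[of j] ce1 j1 K by simp
  next
    case False
    hence "y = real N" using yv by simp
    hence "ce = N" unfolding ce_def by simp
    thus ?thesis using j by simp
  qed
  have cfv: "ceilfloor cost y = (if 1 \<le> fl \<and> cost fl \<le> cost ce then fl else ce)"
    unfolding ceilfloor_def fl_def ce_def by simp
  have bounds: "1 \<le> ceilfloor cost y \<and> ceilfloor cost y \<le> N"
    using cfv ce1 ceN cefl fl ce by (auto split: if_splits)
  have "cost (ceilfloor cost y) \<le> cost j" if j: "1 \<le> j" "j \<le> N" for j
  proof (cases "j \<le> fl")
    case True
    hence l: "cost fl \<le> cost j" using low j by simp
    show ?thesis
    proof (cases "cost fl \<le> cost ce")
      case True thus ?thesis using cfv l j \<open>j \<le> fl\<close> by simp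
    next
      case False thus ?thesis using cfv l j \<open>j \<le> fl\<close> by simp
    qed
  next
    case False
    hence "ce \<le> j" using cefl by simp
    hence h: "cost ce \<le> cost j" using high j by simp
    thus ?thesis using cfv by (auto split: if_splits)
  qed
  thus ?thesis using bounds by simp
qed

theorem lemma1:
  fixes N :: nat and T \<sigma>2 \<gamma> \<alpha> R :: real
  assumes "N \<ge> 1" and "T > 0" and "\<sigma>2 > 0" and "\<gamma> > 0"
    and "0 < \<alpha>" and "\<alpha> \<le> 1" and "R > 0"
  shows
   "let Ra = (lambertW0 (- (1 / \<alpha>) * exp (- (1 / \<alpha>))) + 1 / \<alpha>) / ln 2;
        y = (if Ra = 0 then real N else min (real N * R / Ra) (real N));
        cost = (\<lambda>k. pcons N T 0 \<gamma> \<alpha> (\<lambda>_. 0) k (unif_alloc N \<sigma>2 R k));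
        Na = ceilfloor cost y
    in feasible N \<sigma>2 R Na (unif_alloc N \<sigma>2 R Na) \<and>
       (\<forall>Na' p. feasible N \<sigma>2 R Na' p \<longrightarrow>
          pcons N T 0 \<gamma> \<alpha> (\<lambda>_. 0) Na (unif_alloc N \<sigma>2 R Na)
            \<le> pcons N T 0 \<gamma> \<alpha> (\<lambda>_. 0) Na' p)"
proof -
  note N = assms(1) and T = assms(2) and sg = assms(3) and g = assms(4)
    and a = assms(5,6) and R = assms(7)
  define ts where "ts = lambertW0 (- (1 / \<alpha>) * exp (- (1 / \<alpha>))) + 1 / \<alpha>"
  define Ra where "Ra = (lambertW0 (- (1 / \<alpha>) * exp (- (1 / \<alpha>))) + 1 / \<alpha>) / ln 2"
  define y where "y = (if Ra = 0 then real N else min (real N * R / Ra) (real N))"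
  define cost where "cost = (\<lambda>k. pcons N T 0 \<gamma> \<alpha> (\<lambda>_. 0) k (unif_alloc N \<sigma>2 R k))"
  define Na where "Na = ceilfloor cost y"
  define S where "S = R * real N"
  define K where "K = \<gamma> / real N * \<sigma>2 powr \<alpha> * S"
  have S0: "S > 0" unfolding S_def using R N by simp
  have K0: "K > 0" unfolding K_def using g sg S0 N by simp
  have tsp: "(1 - \<alpha>) / \<alpha> \<le> ts" "hq \<alpha> ts = 0" "ts \<ge> 0"
    using ts_props[OF a] unfolding ts_def by auto
  have Rats: "Ra = ts / ln 2" unfolding Ra_def ts_def by simp
  have Ra0: "Ra \<ge> 0" unfolding Rats using tsp by simp
  have cost_k: "cost k = \<gamma> / real N * \<sigma>2 powr \<alpha> * (real k * ff \<alpha> (S / real k))" for k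
  proof -
    have "(\<Sum>n<k. unif_alloc N \<sigma>2 R k n powr \<alpha>) = (\<Sum>n<k. \<sigma>2 powr \<alpha> * ff \<alpha> (S / real k))"
    proof (rule sum.cong[OF refl])
      fix n assume "n \<in> {..<k}"
      hence nk: "n < k" by simp
      have "2 powr (R * real N / real k) \<ge> 1" using R by (simp add: ge_one_powr_ge_zero)
      hence "((2 powr (R * real N / real k) - 1) * \<sigma>2) powr \<alpha>
          = (2 powr (R * real N / real k) - 1) powr \<alpha> * \<sigma>2 powr \<alpha>"
        using sg by (simp add: powr_mult)
      thus "unif_alloc N \<sigma>2 R k n powr \<alpha> = \<sigma>2 powr \<alpha> * ff \<alpha> (S / real k)"
        unfolding unif_alloc_def ff_def S_def using nk by simp
    qed
    thus ?thesis unfolding cost_def pcons_def by simp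
  qed
  have costH: "cost k = K * hh \<alpha> (S / real k)" if "k \<ge> 1" for k
    unfolding cost_k K_def hh_def using that S0 by (simp add: field_simps)
  have yS: "y = (if Ra = 0 then real N else min (S / Ra) (real N))"
    unfolding y_def S_def by (simp add: mult.commute)
  have ch: "1 \<le> Na \<and> Na \<le> N \<and> (\<forall>j. 1 \<le> j \<longrightarrow> j \<le> N \<longrightarrow> cost Na \<le> cost j)"
    unfolding Na_def
  proof (rule choose[where H="hh \<alpha>", OF N S0 Ra0 K0 _ _ costH yS])
    fix x x' :: real assume "0 < x" "Ra \<le> x" "x \<le> x'"
    thus "hh \<alpha> x \<le> hh \<alpha> x'" using hh_mono[OF a(1) tsp(1,2)] Rats by simp
  next
    fix x x' :: real assume "0 < x" "x \<le> x'" "x' \<le> Ra"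
    thus "hh \<alpha> x' \<le> hh \<alpha> x" using hh_anti[OF a(1) tsp(1,2)] Rats by simp
  qed
  have feas: "feasible N \<sigma>2 R Na (unif_alloc N \<sigma>2 R Na)"
  proof -
    have Na1: "Na \<ge> 1" using ch by simp
    have "(\<Sum>n<Na. log 2 (1 + unif_alloc N \<sigma>2 R Na n / \<sigma>2)) = (\<Sum>n<Na. R * real N / real Na)"
    proof (rule sum.cong[OF refl])
      fix n assume "n \<in> {..<Na}"
      hence "unif_alloc N \<sigma>2 R Na n / \<sigma>2 = 2 powr (R * real N / real Na) - 1"
        unfolding unif_alloc_def using sg by simp
      thus "log 2 (1 + unif_alloc N \<sigma>2 R Na n / \<sigma>2) = R * real N / real Na" by simp
    qed
    also have "\<dots> = R * real N" using Na1 by simp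
    finally have "(1 / real N) * (\<Sum>n<Na. log 2 (1 + unif_alloc N \<sigma>2 R Na n / \<sigma>2)) = R"
      using N by simp
    moreover have "\<forall>n<Na. 0 \<le> unif_alloc N \<sigma>2 R Na n"
      unfolding unif_alloc_def using sg R by (auto simp: ge_one_powr_ge_zero)
    ultimately show ?thesis unfolding feasible_def using ch by simp
  qed
  have opt: "cost Na \<le> pcons N T 0 \<gamma> \<alpha> (\<lambda>_. 0) Na' p" if f: "feasible N \<sigma>2 R Na' p" for Na' p
  proof -
    define x where "x n = log 2 (1 + p n / \<sigma>2)" for n
    have fN: "Na' \<le> N" and p0: "\<forall>n<Na'. 0 \<le> p n"
      and rate: "(1 / real N) * (\<Sum>n<Na'. x n) = R" using f unfolding feasible_def x_def by auto
    have sumx: "(\<Sum>n<Na'. x n) = S" using rate N unfolding S_def by (simp add: field_simps)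
    have Na'1: "Na' \<ge> 1"
    proof (rule ccontr)
      assume "\<not> Na' \<ge> 1" hence "Na' = 0" by simp
      thus False using sumx S0 by simp
    qed
    have x0: "\<forall>n\<in>{..<Na'}. x n \<ge> 0"
    proof
      fix n assume "n \<in> {..<Na'}"
      hence "p n / \<sigma>2 \<ge> 0" using p0 sg by simp
      thus "x n \<ge> 0" unfolding x_def by simp
    qed
    have pw: "p n powr \<alpha> = \<sigma>2 powr \<alpha> * ff \<alpha> (x n)" if "n < Na'" for n
    proof -
      have pn: "p n \<ge> 0" using p0 that by simp
      have "1 + p n / \<sigma>2 > 0" using pn sg by (simp add: add_pos_nonneg)
      hence "2 powr x n = 1 + p n / \<sigma>2" unfolding x_def by simp
      hence "2 powr x n - 1 = p n / \<sigma>2" by simp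
      hence "ff \<alpha> (x n) = (p n / \<sigma>2) powr \<alpha>" unfolding ff_def by simp
      also have "\<dots> = p n powr \<alpha> / \<sigma>2 powr \<alpha>" using pn sg by (simp add: powr_divide)
      finally show ?thesis using sg by simp
    qed
    have pc: "pcons N T 0 \<gamma> \<alpha> (\<lambda>_. 0) Na' p = \<gamma> / real N * \<sigma>2 powr \<alpha> * (\<Sum>n<Na'. ff \<alpha> (x n))"
    proof -
      have "(\<Sum>n<Na'. p n powr \<alpha>) = (\<Sum>n<Na'. \<sigma>2 powr \<alpha> * ff \<alpha> (x n))"
        using pw by (intro sum.cong) auto
      thus ?thesis unfolding pcons_def by (simp add: sum_distrib_left mult.assoc)
    qed
    obtain j :: nat where j: "1 \<le> j" "j \<le> Na'"
      "real j * ff \<alpha> ((\<Sum>n\<in>{..<Na'}. x n) / real j) \<le> (\<Sum>n\<in>{..<Na'}. ff \<alpha> (x n))"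
      using lowerA[OF a, of "{..<Na'}" Na' x] Na'1 x0 by auto
    have "cost Na \<le> cost j" using ch j fN by simp
    also have "\<dots> = \<gamma> / real N * \<sigma>2 powr \<alpha> * (real j * ff \<alpha> (S / real j))" by (rule cost_k)
    also have "\<dots> \<le> \<gamma> / real N * \<sigma>2 powr \<alpha> * (\<Sum>n<Na'. ff \<alpha> (x n))"
      using j(3) sumx g N sg by (intro mult_left_mono) auto
    finally show ?thesis using pc by simp
  qed
  have main: "feasible N \<sigma>2 R Na (unif_alloc N \<sigma>2 R Na) \<and>
       (\<forall>Na' p. feasible N \<sigma>2 R Na' p \<longrightarrow>
          pcons N T 0 \<gamma> \<alpha> (\<lambda>_. 0) Na (unif_alloc N \<sigma>2 R Na)
            \<le> pcons N T 0 \<gamma> \<alpha> (\<lambda>_. 0) Na' p)"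
    using feas opt unfolding cost_def by blast
  show ?thesis using main unfolding Let_def Ra_def y_def cost_def Na_def .
qed

end
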